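(* The eigenvalues of $\mathcal F_\omega^{-1}\mathcal R$ cluster at $0$ from the right half-plane as $\omega\to+\infty$. Precisely: for every $\delta>0$ there is $\Omega>0$ such that, for every $\omega>\Omega$, every eigenvalue $\eta$ of $\mathcal F_\omega^{-1}\mathcal R$ satisfies $$0<\operatorname{Re}\eta<\delta\quad\text{and}\quad|\operatorname{Im}\eta|<\delta .$$
   Context: Let $M\ge 1$ be an integer and let $I$ denote an identity matrix of the appropriate size. Let $T\in\mathbb R^{M\times M}$ be real symmetric positive definite. Let $D\in\mathbb R^{M\times M}$ be diagonal with nonnegative diagonal entries. Define the block matrices in $\mathbb R^{2M\times 2M}$: $$\mathcal R=\begin{bmatrix} I & T-D\\ D-T & I\end{bmatrix},\qquad \mathcal T=\begin{bmatrix} I & T\\ -T & I\end{bmatrix},\qquad \mathcal D=\begin{bmatrix} 0 & -D\\ D & 0\end{bmatrix}.$$ Thus $\mathcal R=\mathcal T+\mathcal D$. For $\omega>0$, the NASS preconditioner is $$\mathcal F_\omega=\tfrac{1}{2\omega}(\omega I+\mathcal T)(\omega I+\mathcal D).$$ *)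

theory Defs
  imports "Jordan_Normal_Form.Char_Poly"
begin

definition sym_pos_def_mat :: "nat \<Rightarrow> real mat \<Rightarrow> bool" where
  "sym_pos_def_mat n T \<longleftrightarrow> T \<in> carrier_mat n n \<and> transpose_mat T = T \<and>
     (\<forall>x \<in> carrier_vec n. x \<noteq> 0\<^sub>v n \<longrightarrow> x \<bullet> (T *\<^sub>v x) > 0)"

definition calR :: "nat \<Rightarrow> real mat \<Rightarrow> real mat \<Rightarrow> real mat" where
  "calR n T D = four_block_mat (1\<^sub>m n) (T - D) (D - T) (1\<^sub>m n)"

definition calT :: "nat \<Rightarrow> real mat \<Rightarrow> real mat" where
  "calT n T = four_block_mat (1\<^sub>m n) T (- T) (1\<^sub>m n)"

definition calD :: "nat \<Rightarrow> real mat \<Rightarrow> real mat" where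
  "calD n D = four_block_mat (0\<^sub>m n n) (- D) D (0\<^sub>m n n)"

definition NASS_prec :: "nat \<Rightarrow> real mat \<Rightarrow> real mat \<Rightarrow> real \<Rightarrow> real mat" where
  "NASS_prec n T D \<omega> = (1 / (2 * \<omega>)) \<cdot>\<^sub>m
     ((\<omega> \<cdot>\<^sub>m 1\<^sub>m (2 * n) + calT n T) * (\<omega> \<cdot>\<^sub>m 1\<^sub>m (2 * n) + calD n D))"

end

theory Submission
  imports Defs
begin

definition nrm :: "complex vec \<Rightarrow> nat \<Rightarrow> real" where
  "nrm x n = (\<Sum>i<n. (cmod (x$i))^2)"
definition qf :: "real mat \<Rightarrow> complex vec \<Rightarrow> nat \<Rightarrow> complex" where
  "qf A x n = (\<Sum>i<n. \<Sum>j<n. cnj (x$i) * of_real (A$$(i,j)) * x$j)"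

lemma qf_add: "A \<in> carrier_mat n n \<Longrightarrow> B \<in> carrier_mat n n \<Longrightarrow> qf (A+B) x n = qf A x n + qf B x n"
  unfolding qf_def by (simp add: sum.distrib[symmetric] algebra_simps)

lemma qf_smult: "A \<in> carrier_mat n n \<Longrightarrow> qf (c \<cdot>\<^sub>m A) x n = of_real c * qf A x n"
  unfolding qf_def by (simp add: sum_distrib_left algebra_simps)

lemma qf_one: "qf (1\<^sub>m n) x n = of_real (nrm x n)"
proof -
  have "qf (1\<^sub>m n) x n = (\<Sum>i<n. cnj (x$i) * x$i)"
    unfolding qf_def
  proof (rule sum.cong, simp)
    fix i assume i: "i \<in> {..<n}"
    have "(\<Sum>j<n. cnj (x$i) * of_real (1\<^sub>m n $$ (i,j)) * x$j) = (\<Sum>j<n. if i = j then cnj (x$i) * x$j else 0)"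
      by (rule sum.cong) (use i in auto)
    also have "\<dots> = cnj (x$i) * x$i" using i by (simp add: sum.delta)
    finally show "(\<Sum>j<n. cnj (x$i) * of_real (1\<^sub>m n $$ (i,j)) * x$j) = cnj (x$i) * x$i" .
  qed
  also have "\<dots> = (\<Sum>i<n. of_real ((cmod (x$i))^2))"
    by (rule sum.cong, simp, subst complex_norm_square, rule mult.commute)
  finally show ?thesis unfolding nrm_def by simp
qed

lemma nrm_pos: assumes "x \<in> carrier_vec n" "x \<noteq> 0\<^sub>v n" shows "nrm x n > 0"
proof -
  from assms obtain k where k: "k < n" "x$k \<noteq> 0" by (metis eq_vecI carrier_vecD index_zero_vec)
  have "(cmod (x$k))^2 \<le> nrm x n" unfolding nrm_def
    by (rule member_le_sum[of k "{..<n}" "\<lambda>i. (cmod (x$i))^2"]) (use k in auto)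
  moreover have "(cmod (x$k))^2 > 0" using k by simp
  ultimately show ?thesis by linarith
qed

lemma qf_bound: "cmod (qf A x n) \<le> (\<Sum>i<n. \<Sum>j<n. \<bar>A$$(i,j)\<bar>) * nrm x n"
proof -
  have el: "cmod (x$i) * cmod (x$j) \<le> nrm x n" if "i < n" "j < n" for i j
  proof -
    have a: "(cmod (x$k))^2 \<le> nrm x n" if "k < n" for k unfolding nrm_def
      by (rule member_le_sum[of k "{..<n}" "\<lambda>i. (cmod (x$i))^2"]) (use that in auto)
    have "cmod (x$i) * cmod (x$j) \<le> ((cmod (x$i))^2 + (cmod (x$j))^2)/2"
      using sum_squares_bound[of "cmod (x$i)" "cmod (x$j)"] by (simp add: power2_eq_square algebra_simps)
    also have "\<dots> \<le> nrm x n" using a[OF that(1)] a[OF that(2)] by simp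
    finally show ?thesis .
  qed
  have "cmod (qf A x n) \<le> (\<Sum>i<n. \<Sum>j<n. cmod (cnj (x$i) * of_real (A$$(i,j)) * x$j))"
    unfolding qf_def by (rule order_trans[OF norm_sum sum_mono[OF norm_sum]])
  also have "\<dots> \<le> (\<Sum>i<n. \<Sum>j<n. \<bar>A$$(i,j)\<bar> * nrm x n)"
  proof (intro sum_mono)
    fix i j assume "i \<in> {..<n}" "j \<in> {..<n}"
    then have "cmod (x$i) * cmod (x$j) \<le> nrm x n" using el by auto
    then have "\<bar>A$$(i,j)\<bar> * (cmod (x$i) * cmod (x$j)) \<le> \<bar>A$$(i,j)\<bar> * nrm x n"
      by (simp add: mult_left_mono)
    then show "cmod (cnj (x$i) * of_real (A$$(i,j)) * x$j) \<le> \<bar>A$$(i,j)\<bar> * nrm x n"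
      by (simp add: norm_mult algebra_simps)
  qed
  also have "\<dots> = (\<Sum>i<n. \<Sum>j<n. \<bar>A$$(i,j)\<bar>) * nrm x n" by (simp add: sum_distrib_right)
  finally show ?thesis .
qed

lemma qf_re: assumes "\<And>i j. i < n \<Longrightarrow> j < n \<Longrightarrow> A$$(i,j) + A$$(j,i) = (if i = j then 2 else 0)"
  shows "Re (qf A x n) = nrm x n"
proof -
  let ?q = "qf A x n"
  have "cnj ?q = (\<Sum>i<n. \<Sum>j<n. x$i * of_real (A$$(i,j)) * cnj (x$j))"
    unfolding qf_def by (simp add: cnj_sum mult.commute)
  also have "\<dots> = (\<Sum>i<n. \<Sum>j<n. cnj (x$i) * of_real (A$$(j,i)) * x$j)"
    by (subst sum.swap) (simp add: mult.commute mult.left_commute)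
  finally have c: "cnj ?q = \<dots>" .
  have "?q + cnj ?q = (\<Sum>i<n. \<Sum>j<n. cnj (x$i) * of_real (A$$(i,j) + A$$(j,i)) * x$j)"
    unfolding c unfolding qf_def sum.distrib[symmetric] by (intro sum.cong refl) (simp add: algebra_simps)
  also have "\<dots> = (\<Sum>i<n. \<Sum>j<n. cnj (x$i) * (if i = j then 2 else 0) * x$j)"
    by (intro sum.cong refl) (simp add: assms)
  also have "\<dots> = (\<Sum>i<n. 2 * (cnj (x$i) * x$i))"
  proof (rule sum.cong, simp)
    fix i assume i: "i \<in> {..<n}"
    have "(\<Sum>j<n. cnj (x$i) * (if i = j then 2 else 0) * x$j) = (\<Sum>j<n. if i = j then 2 * (cnj (x$i) * x$j) else 0)"
      by (rule sum.cong) auto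
    also have "\<dots> = 2 * (cnj (x$i) * x$i)" using i by (simp add: sum.delta)
    finally show "(\<Sum>j<n. cnj (x$i) * (if i = j then 2 else 0) * x$j) = 2 * (cnj (x$i) * x$i)" .
  qed
  also have "\<dots> = (\<Sum>i<n. of_real (2 * (cmod (x$i))^2))"
  proof (rule sum.cong, simp)
    fix i
    have "cnj (x$i) * x$i = of_real ((cmod (x$i))^2)" by (subst complex_norm_square) (rule mult.commute)
    then show "2 * (cnj (x$i) * x$i) = of_real (2 * (cmod (x$i))^2)" by simp
  qed
  finally have "Re (?q + cnj ?q) = 2 * nrm x n" unfolding nrm_def by (simp add: sum_distrib_left)
  then show ?thesis by simp
qed

lemma map_of_real_mult:
  assumes "A \<in> carrier_mat nr m" "B \<in> carrier_mat m nc"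
  shows "map_mat (of_real :: real \<Rightarrow> complex) (A * B) = map_mat of_real A * map_mat of_real B"
  using assms by (intro eq_matI) (auto simp: scalar_prod_def of_real_sum)

lemma map_of_real_one: "map_mat (of_real :: real \<Rightarrow> complex) (1\<^sub>m n) = 1\<^sub>m n"
  by (intro eq_matI) auto

lemma qf_mv: assumes "A \<in> carrier_mat n n" "x \<in> carrier_vec n"
  shows "qf A x n = (\<Sum>i<n. cnj (x$i) * (map_mat of_real A *\<^sub>v x)$i)"
  unfolding qf_def
proof (rule sum.cong, simp)
  fix i assume i: "i \<in> {..<n}"
  then show "(\<Sum>j<n. cnj (x$i) * of_real (A$$(i,j)) * x$j) = cnj (x$i) * (map_mat of_real A *\<^sub>v x)$i"
    using assms by (simp add: scalar_prod_def sum_distrib_left mult.assoc lessThan_atLeast0)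
qed

lemma qf_eig: assumes "A \<in> carrier_mat n n" "B \<in> carrier_mat n n" "x \<in> carrier_vec n"
  and "map_mat of_real A *\<^sub>v x = \<eta> \<cdot>\<^sub>v (map_mat of_real B *\<^sub>v x)"
  shows "qf A x n = \<eta> * qf B x n"
  unfolding qf_mv[OF assms(1,3)] qf_mv[OF assms(2,3)] assms(4) sum_distrib_left
  by (rule sum.cong) (use assms(2) in auto)

lemma final_arith:
  fixes r e \<eta> :: complex and N CR C \<omega> \<delta> :: real
  assumes N: "N > 0" and r1: "cmod r \<le> CR * N" and r2: "Re r = N" and e: "cmod e \<le> C * N"
    and C: "C \<ge> 0" "CR \<ge> 0" and d: "\<delta> > 0"
    and w: "\<omega> > 1 + 2*C + 2*C*CR + 2*CR/\<delta>"
    and eq: "r = \<eta> * (of_real (\<omega>/2*N) + e)"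
  shows "0 < Re \<eta> \<and> Re \<eta> < \<delta> \<and> \<bar>Im \<eta>\<bar> < \<delta>"
proof -
  define f where "f = of_real (\<omega>/2*N) + e"
  define a where "a = \<omega>/2 - C"
  have "CR/\<delta> \<ge> 0" using C d by simp
  have "C*CR \<ge> 0" using C by simp
  have a1: "a > C*CR" and a2: "a > CR/\<delta>" and a0: "a > 0"
    using w C \<open>CR/\<delta> \<ge> 0\<close> \<open>C*CR \<ge> 0\<close> unfolding a_def by linarith+
  have a3: "CR < \<delta> * a" using a2 d by (simp add: field_simps)
  have "\<bar>Re e\<bar> \<le> C*N" using abs_Re_le_cmod[of e] e by linarith
  hence Ref: "Re f \<ge> a * N" unfolding f_def a_def by (simp add: algebra_simps)
  have "a * N > 0" using a0 N by simp
  hence fpos: "Re f > 0" using Ref by linarith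
  hence f0: "f \<noteq> 0" by auto
  have eta: "\<eta> = r / f" using eq f0 unfolding f_def[symmetric] by simp
  have cf: "cmod f \<ge> a * N" using Ref abs_Re_le_cmod[of f] by linarith
  have "cmod \<eta> * cmod f = cmod r" using eq unfolding f_def[symmetric] by (simp add: norm_mult)
  hence "cmod \<eta> * (a * N) \<le> CR * N" using cf r1 mult_left_mono[OF cf norm_ge_zero[of \<eta>]] by linarith
  hence "cmod \<eta> * a \<le> CR" using N by (simp add: mult.assoc[symmetric])
  hence "cmod \<eta> * a < \<delta> * a" using a3 by linarith
  hence ceta: "cmod \<eta> < \<delta>" using a0 by simp
  have Imf: "\<bar>Im f\<bar> \<le> C * N" unfolding f_def using abs_Im_le_cmod[of e] e by simp
  have Imr: "\<bar>Im r\<bar> \<le> CR * N" using abs_Im_le_cmod[of r] r1 by linarith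
  have "\<bar>Im r * Im f\<bar> \<le> (CR*N) * (C*N)"
    unfolding abs_mult by (rule mult_mono[OF Imr Imf]) (use C N in auto)
  moreover have "Re r * Re f \<ge> N * (a * N)" using r2 Ref N by (simp add: mult_left_mono)
  moreover have "N * (a*N) - (CR*N)*(C*N) = N*N*(a - C*CR)" by (simp add: algebra_simps)
  moreover have "N*N*(a - C*CR) > 0" using N a1 by simp
  ultimately have num: "Re r * Re f + Im r * Im f > 0" by linarith
  have den: "(Re f)^2 + (Im f)^2 > 0" using fpos by (simp add: add_pos_nonneg)
  have "Re \<eta> > 0" unfolding eta Re_divide using num den by simp
  moreover have "Re \<eta> < \<delta>" using abs_Re_le_cmod[of \<eta>] ceta by linarith
  moreover have "\<bar>Im \<eta>\<bar> < \<delta>" using abs_Im_le_cmod[of \<eta>] ceta by linarith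
  ultimately show ?thesis by simp
qed

theorem theorem4p2:
  fixes M :: nat and T D :: "real mat"
  assumes "M \<ge> 1"
    and "sym_pos_def_mat M T"
    and "D \<in> carrier_mat M M" and "diagonal_mat D" and "\<forall>i < M. D $$ (i, i) \<ge> 0"
  shows "\<forall>\<delta> > 0. \<exists>\<Omega> > 0. \<forall>\<omega> > \<Omega>. \<forall>G \<in> carrier_mat (2 * M) (2 * M).
           G * NASS_prec M T D \<omega> = 1\<^sub>m (2 * M) \<and> NASS_prec M T D \<omega> * G = 1\<^sub>m (2 * M) \<longrightarrow>
           (\<forall>\<eta>. eigenvalue (map_mat complex_of_real (G * calR M T D)) \<eta> \<longrightarrow>
              0 < Re \<eta> \<and> Re \<eta> < \<delta> \<and> \<bar>Im \<eta>\<bar> < \<delta>)"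
proof (intro allI impI)
  fix \<delta> :: real assume d: "\<delta> > 0"
  define n where "n = 2 * M"
  have Tc: "T \<in> carrier_mat M M" and Tt: "transpose_mat T = T"
    using assms(2) unfolding sym_pos_def_mat_def by auto
  have Dc: "D \<in> carrier_mat M M" by (rule assms(3))
  have Tsym: "T $$ (a,b) = T $$ (b,a)" if "a < M" "b < M" for a b
  proof -
    have "T $$ (a,b) = transpose_mat T $$ (a,b)" using Tt by simp
    also have "\<dots> = T $$ (b,a)" using that Tc by simp
    finally show ?thesis .
  qed
  have Dsym: "D $$ (a,b) = D $$ (b,a)" if "a < M" "b < M" for a b
    using assms(4) that Dc unfolding diagonal_mat_def by (cases "a = b") auto
  define R where "R = calR M T D"
  define T' where "T' = calT M T"
  define D' where "D' = calD M D"
  have Rc: "R \<in> carrier_mat n n" unfolding R_def calR_def n_def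
    using four_block_carrier_mat[of "1\<^sub>m M" M M "1\<^sub>m M" M M "T - D" "D - T"] by (simp add: mult_2)
  have T'c: "T' \<in> carrier_mat n n" unfolding T'_def calT_def n_def
    using four_block_carrier_mat[of "1\<^sub>m M" M M "1\<^sub>m M" M M T "- T"] by (simp add: mult_2)
  have D'c: "D' \<in> carrier_mat n n" unfolding D'_def calD_def n_def
    using four_block_carrier_mat[of "0\<^sub>m M M" M M "0\<^sub>m M M" M M "- D" D] by (simp add: mult_2)
  have Rskew: "R$$(i,j) + R$$(j,i) = (if i = j then 2 else 0)" if "i < n" "j < n" for i j
    using that Tc Dc Tsym Dsym unfolding R_def calR_def n_def by auto
  define CR where "CR = (\<Sum>i<n. \<Sum>j<n. \<bar>R$$(i,j)\<bar>)"
  define CT where "CT = (\<Sum>i<n. \<Sum>j<n. \<bar>T'$$(i,j)\<bar>)"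
  define CD where "CD = (\<Sum>i<n. \<Sum>j<n. \<bar>D'$$(i,j)\<bar>)"
  define CP where "CP = (\<Sum>i<n. \<Sum>j<n. \<bar>(T' * D')$$(i,j)\<bar>)"
  define C where "C = CT/2 + CD/2 + CP/2"
  have CR0: "CR \<ge> 0" unfolding CR_def by (intro sum_nonneg) auto
  have C0: "C \<ge> 0" unfolding C_def CT_def CD_def CP_def by (intro add_nonneg_nonneg divide_nonneg_pos sum_nonneg) auto
  define \<Omega> where "\<Omega> = 1 + 2*C + 2*C*CR + 2*CR/\<delta>"
  have "CR/\<delta> \<ge> 0" using CR0 d by simp
  hence \<Omega>1: "\<Omega> \<ge> 1" unfolding \<Omega>_def using C0 CR0 by (simp add: add_nonneg_nonneg)
  show "\<exists>\<Omega> > 0. \<forall>\<omega> > \<Omega>. \<forall>G \<in> carrier_mat (2 * M) (2 * M).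
           G * NASS_prec M T D \<omega> = 1\<^sub>m (2 * M) \<and> NASS_prec M T D \<omega> * G = 1\<^sub>m (2 * M) \<longrightarrow>
           (\<forall>\<eta>. eigenvalue (map_mat complex_of_real (G * calR M T D)) \<eta> \<longrightarrow>
              0 < Re \<eta> \<and> Re \<eta> < \<delta> \<and> \<bar>Im \<eta>\<bar> < \<delta>)"
  proof (intro exI[of _ \<Omega>] conjI allI impI ballI)
    show "\<Omega> > 0" using \<Omega>1 by simp
    fix \<omega> :: real and G :: "real mat" and \<eta> :: complex
    assume w: "\<omega> > \<Omega>" and Gc: "G \<in> carrier_mat (2 * M) (2 * M)"
      and inv: "G * NASS_prec M T D \<omega> = 1\<^sub>m (2 * M) \<and> NASS_prec M T D \<omega> * G = 1\<^sub>m (2 * M)"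
      and ev: "eigenvalue (map_mat complex_of_real (G * calR M T D)) \<eta>"
    have Gc: "G \<in> carrier_mat n n" using Gc n_def by simp
    have w1: "\<omega> > 1" using w \<Omega>1 by simp
    define P where "P = (\<omega> \<cdot>\<^sub>m 1\<^sub>m n + T') * (\<omega> \<cdot>\<^sub>m 1\<^sub>m n + D')"
    define F where "F = NASS_prec M T D \<omega>"
    have F: "F = (1 / (2 * \<omega>)) \<cdot>\<^sub>m P" unfolding F_def NASS_prec_def P_def T'_def D'_def n_def ..
    have Pc: "P \<in> carrier_mat n n" unfolding P_def using T'c D'c by auto
    have Fc: "F \<in> carrier_mat n n" unfolding F using Pc by simp
    have FG: "F * G = 1\<^sub>m n" using inv unfolding F_def n_def by simp
    let ?m = "map_mat (of_real :: real \<Rightarrow> complex)"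
    from ev obtain x where x: "x \<in> carrier_vec n" "x \<noteq> 0\<^sub>v n"
      and evx: "?m (G * R) *\<^sub>v x = \<eta> \<cdot>\<^sub>v x"
      unfolding eigenvalue_def eigenvector_def R_def[symmetric] using Gc Rc by auto
    have mGR: "?m (G * R) = ?m G * ?m R" by (rule map_of_real_mult[OF Gc Rc])
    have "?m F * ?m G = 1\<^sub>m n" using map_of_real_mult[OF Fc Gc] FG map_of_real_one by simp
    have "?m R *\<^sub>v x = (?m F * ?m G * ?m R) *\<^sub>v x"
      using \<open>?m F * ?m G = 1\<^sub>m n\<close> Rc by simp
    also have "\<dots> = ?m F *\<^sub>v (?m (G * R) *\<^sub>v x)" unfolding mGR
    proof -
      have c: "?m F \<in> carrier_mat n n" "?m G \<in> carrier_mat n n" "?m R \<in> carrier_mat n n"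
        using Fc Gc Rc by auto
      have "?m G * ?m R \<in> carrier_mat n n" using c by auto
      then show "(?m F * ?m G * ?m R) *\<^sub>v x = ?m F *\<^sub>v (?m G * ?m R *\<^sub>v x)"
        using c x assoc_mult_mat[OF c] assoc_mult_mat_vec[OF c(1) _ x(1)] by metis
    qed
    also have "\<dots> = \<eta> \<cdot>\<^sub>v (?m F *\<^sub>v x)" unfolding evx
      by (rule mult_mat_vec[of _ n n]) (use Fc x in auto)
    finally have eqv: "?m R *\<^sub>v x = \<eta> \<cdot>\<^sub>v (?m F *\<^sub>v x)" .
    have qRF: "qf R x n = \<eta> * qf F x n" by (rule qf_eig[OF Rc Fc x(1) eqv])
    define N where "N = nrm x n"
    have N: "N > 0" unfolding N_def by (rule nrm_pos[OF x])
    have P_eq: "P = ((\<omega>*\<omega>) \<cdot>\<^sub>m 1\<^sub>m n + \<omega> \<cdot>\<^sub>m D') + (\<omega> \<cdot>\<^sub>m T' + T' * D')"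
    proof -
      have "P = (\<omega> \<cdot>\<^sub>m 1\<^sub>m n) * (\<omega> \<cdot>\<^sub>m 1\<^sub>m n + D') + T' * (\<omega> \<cdot>\<^sub>m 1\<^sub>m n + D')"
        unfolding P_def using T'c D'c by (intro add_mult_distrib_mat[of _ n n]) auto
      also have "\<dots> = ((\<omega> \<cdot>\<^sub>m 1\<^sub>m n) * (\<omega> \<cdot>\<^sub>m 1\<^sub>m n) + (\<omega> \<cdot>\<^sub>m 1\<^sub>m n) * D')
           + (T' * (\<omega> \<cdot>\<^sub>m 1\<^sub>m n) + T' * D')"
      proof -
        have c1: "\<omega> \<cdot>\<^sub>m 1\<^sub>m n \<in> carrier_mat n n" by simp
        show ?thesis using mult_add_distrib_mat[OF c1 c1 D'c] mult_add_distrib_mat[OF T'c c1 D'c] by simp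
      qed
      also have "(\<omega> \<cdot>\<^sub>m 1\<^sub>m n) * (\<omega> \<cdot>\<^sub>m 1\<^sub>m n) = (\<omega>*\<omega>) \<cdot>\<^sub>m 1\<^sub>m n"
      proof -
        have "(\<omega> \<cdot>\<^sub>m 1\<^sub>m n) * (\<omega> \<cdot>\<^sub>m 1\<^sub>m n) = \<omega> \<cdot>\<^sub>m (1\<^sub>m n * (\<omega> \<cdot>\<^sub>m 1\<^sub>m n))"
          by (rule mult_smult_assoc_mat[of _ n n]) auto
        also have "\<dots> = \<omega> \<cdot>\<^sub>m (\<omega> \<cdot>\<^sub>m 1\<^sub>m n)" by simp
        also have "\<dots> = (\<omega>*\<omega>) \<cdot>\<^sub>m 1\<^sub>m n" by (intro eq_matI) auto
        finally show ?thesis .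
      qed
      also have "(\<omega> \<cdot>\<^sub>m 1\<^sub>m n) * D' = \<omega> \<cdot>\<^sub>m D'"
        using mult_smult_assoc_mat[of "1\<^sub>m n" n n D' n \<omega>] D'c by simp
      also have "T' * (\<omega> \<cdot>\<^sub>m 1\<^sub>m n) = \<omega> \<cdot>\<^sub>m T'"
        using mult_smult_distrib[of T' n n "1\<^sub>m n" n \<omega>] T'c by simp
      finally show ?thesis .
    qed
    have qP: "qf P x n = of_real (\<omega>*\<omega>) * of_real N + of_real \<omega> * qf D' x n + (of_real \<omega> * qf T' x n + qf (T'*D') x n)"
      unfolding P_eq N_def using T'c D'c
      by (simp add: qf_add qf_smult qf_one)
    define e where "e = (1/2) * qf T' x n + (1/2) * qf D' x n + of_real (1/(2*\<omega>)) * qf (T'*D') x n"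
    have qF: "qf F x n = of_real (\<omega>/2*N) + e"
      unfolding F e_def using Pc w1 by (simp add: qf_smult qP field_simps)
    have bT: "cmod (qf T' x n) \<le> CT * N" unfolding CT_def N_def by (rule qf_bound)
    have bD: "cmod (qf D' x n) \<le> CD * N" unfolding CD_def N_def by (rule qf_bound)
    have bP: "cmod (qf (T'*D') x n) \<le> CP * N" unfolding CP_def N_def by (rule qf_bound)
    have "CP \<ge> 0" unfolding CP_def by (intro sum_nonneg) auto
    have "cmod (of_real (1/(2*\<omega>)) * qf (T'*D') x n) \<le> (1/2) * (CP * N)"
    proof -
      have "cmod (of_real (1/(2*\<omega>)) * qf (T'*D') x n) = (1/(2*\<omega>)) * cmod (qf (T'*D') x n)"
        using w1 by (simp only: norm_mult norm_of_real) simp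
      also have "\<dots> \<le> (1/(2*\<omega>)) * (CP * N)" using bP w1 by (intro mult_left_mono) auto
      also have "\<dots> \<le> (1/2) * (CP * N)" using w1 \<open>CP \<ge> 0\<close> N
        by (intro mult_right_mono) (auto simp: field_simps)
      finally show ?thesis .
    qed
    moreover have "cmod ((1/2) * qf T' x n) \<le> (1/2) * (CT * N)" using bT by (simp add: norm_mult)
    moreover have "cmod ((1/2) * qf D' x n) \<le> (1/2) * (CD * N)" using bD by (simp add: norm_mult)
    ultimately have be: "cmod e \<le> C * N" unfolding e_def C_def
      using norm_triangle_ineq[of "(1/2) * qf T' x n + (1/2) * qf D' x n" "of_real (1/(2*\<omega>)) * qf (T'*D') x n"]
        norm_triangle_ineq[of "(1/2) * qf T' x n" "(1/2) * qf D' x n"]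
      by (simp add: algebra_simps)
    have r1: "cmod (qf R x n) \<le> CR * N" unfolding CR_def N_def by (rule qf_bound)
    have r2: "Re (qf R x n) = N" unfolding N_def by (rule qf_re[OF Rskew])
    have "0 < Re \<eta> \<and> Re \<eta> < \<delta> \<and> \<bar>Im \<eta>\<bar> < \<delta>"
      by (rule final_arith[OF N r1 r2 be C0 CR0 d _ qRF[unfolded qF]]) (use w \<Omega>_def in simp)
    then show "0 < Re \<eta>" "Re \<eta> < \<delta>" "\<bar>Im \<eta>\<bar> < \<delta>" by auto
  qed
qed

end
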